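(* Assume the setting and algorithm described in the context, with any step-size $\alpha>0$. Let $\beta>0$ be arbitrary and $\theta:=1-\frac1m+\alpha\beta+\frac{2\alpha^2L^2}{n}$. Then for all $k\ge0$, almost surely, $$\mathbb E\big[t^{k+1}\,|\,\mathcal F^k\big]\le\theta\,t^k+\Big(2\alpha^2+\frac\alpha\beta\Big)\|\overline{\nabla\mathbf f}(x^k)\|^2+\Big(\frac{2\alpha^2L^2}{n}+\frac2m\Big)\frac1n\|x^k-Jx^k\|^2 .$$
   Context: Setting. Let $n,m,p\ge1$ be integers and $\mathcal V=\{1,\dots,n\}$. For each $i\in\mathcal V$ and $j\in\{1,\dots,m\}$, $f_{i,j}:\mathbb R^p\to\mathbb R$ is differentiable and $L$-smooth for some $L>0$, i.e. $\|\nabla f_{i,j}(x)-\nabla f_{i,j}(y)\|\le L\|x-y\|$ for all $x,y\in\mathbb R^p$. Let $f_i:=\frac1m\sum_{j=1}^m f_{i,j}$ and $F:=\frac1n\sum_{i=1}^n f_i$, and assume $F^*:=\inf_{x\in\mathbb R^p}F(x)>-\infty$. Let $\underline W=(\underline w_{ir})\in\mathbb R^{n\times n}$ be a nonnegative, primitive, doubly stochastic matrix ($\underline W\mathbf 1_n=\mathbf 1_n$, $\mathbf 1_n^\top\underline W=\mathbf 1_n^\top$), and let $\lambda\in[0,1)$ be its second largest singular value. Any expression with $\lambda$ in a denominator is read as $+\infty$ when $\lambda=0$. Algorithm GT-SAGA with step-size $\alpha>0$: fix a deterministic $\bar x^0\in\mathbb R^p$; for all $i\in\mathcal V$ set $x_i^0=\bar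 x^0$, $z_{i,j}^0=x_i^0$ for all $j$, $y_i^0=0$, $g_i^{-1}=0$. For $k=0,1,2,\dots$ and every $i\in\mathcal V$: draw $\tau_i^k$ uniformly from $\{1,\dots,m\}$; set $g_i^k=\nabla f_{i,\tau_i^k}(x_i^k)-\nabla f_{i,\tau_i^k}(z_{i,\tau_i^k}^k)+\frac1m\sum_{j=1}^m\nabla f_{i,j}(z_{i,j}^k)$; set $y_i^{k+1}=\sum_{r=1}^n\underline w_{ir}(y_r^k+g_r^k-g_r^{k-1})$; set $x_i^{k+1}=\sum_{r=1}^n\underline w_{ir}(x_r^k-\alpha y_r^{k+1})$; draw $s_i^k$ uniformly from $\{1,\dots,m\}$; set $z_{i,j}^{k+1}=x_i^k$ if $j=s_i^k$ and $z_{i,j}^{k+1}=z_{i,j}^k$ otherwise. The family $\{\tau_i^k,s_i^k: i\in\mathcal V,k\ge0\}$ is independent. Notation. $x^k,y^k,g^k\in\mathbb R^{np}$ stack the $x_i^k$, $y_i^k$, $g_i^k$; $\nabla\mathbf f(x^k)\in\mathbb R^{np}$ stacks $\nabla f_i(x_i^k)$, $i=1,\dots,n$; $W=\underline W\otimes I_p$, $J=(\frac1n\mathbf 1_n\mathbf 1_n^\top)\otimes I_p$; $\bar x^k=\frac1n\sum_i x_i^k$, $\bar g^k=\frac1n\sum_i g_i^k$, $\overline{\nabla\mathbf f}(x^k)=\frac1n\sum_i\nabla f_i(x_i^k)$. $\mathcal F^0$ is the trivial $\sigma$-algebra and $\mathcal F^k=\sigma(\{\tau_i^t,s_i^t:i\in\mathcal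 V,\ t\le k-1\})$ for $k\ge1$. $t^k:=\frac1n\sum_{i=1}^n\frac1m\sum_{j=1}^m\|\bar x^k-z_{i,j}^k\|^2$. $\|\nabla\mathbf f(x^0)\|^2:=\sum_{i=1}^n\|\nabla f_i(\bar x^0)\|^2$. Norms are Euclidean (spectral for matrices); vector and matrix inequalities are entrywise. *)

theory Defs
  imports "HOL-Analysis.Analysis" "HOL-Probability.Probability"
begin

(* Nodes are indexed 0..<n, component functions 0..<m (0-based instead of 1-based). *)

fun mat_pow :: "nat \<Rightarrow> (nat \<Rightarrow> nat \<Rightarrow> real) \<Rightarrow> nat \<Rightarrow> nat \<Rightarrow> nat \<Rightarrow> real" where
  "mat_pow n W 0 = (\<lambda>i j. if i = j then 1 else 0)"
| "mat_pow n W (Suc k) = (\<lambda>i j. \<Sum>r<n. mat_pow n W k i r * W r j)"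

definition primitive_mat :: "nat \<Rightarrow> (nat \<Rightarrow> nat \<Rightarrow> real) \<Rightarrow> bool" where
  "primitive_mat n W \<longleftrightarrow> (\<exists>k. \<forall>i<n. \<forall>j<n. mat_pow n W k i j > 0)"

definition doubly_stochastic :: "nat \<Rightarrow> (nat \<Rightarrow> nat \<Rightarrow> real) \<Rightarrow> bool" where
  "doubly_stochastic n W \<longleftrightarrow>
     (\<forall>i<n. \<forall>j<n. W i j \<ge> 0) \<and> (\<forall>i<n. (\<Sum>j<n. W i j) = 1) \<and> (\<forall>j<n. (\<Sum>i<n. W i j) = 1)"

(* One random draw per node and per iteration: the pair (tau_i^k, s_i^k). *)
type_synonym draws = "nat \<Rightarrow> nat \<times> nat"

(* State of GT-SAGA at iteration k: (x^k, y^k, z^k, g^{k-1}) *)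
type_synonym 'a gt_state = "(nat \<Rightarrow> 'a) \<times> (nat \<Rightarrow> 'a) \<times> (nat \<Rightarrow> nat \<Rightarrow> 'a) \<times> (nat \<Rightarrow> 'a)"

(* the stochastic gradient g_i^k, given the state and the draws at time k;
   Df i j is the gradient of f_{i,j} *)
definition saga_grad ::
  "nat \<Rightarrow> (nat \<Rightarrow> nat \<Rightarrow> 'a::euclidean_space \<Rightarrow> 'a) \<Rightarrow> 'a gt_state \<Rightarrow> draws \<Rightarrow> nat \<Rightarrow> 'a" where
  "saga_grad m Df st d i =
     (case st of (x, y, z, gp) \<Rightarrow>
        Df i (fst (d i)) (x i) - Df i (fst (d i)) (z i (fst (d i)))
        + (1 / real m) *\<^sub>R (\<Sum>j<m. Df i j (z i j)))"

definition gt_step ::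
  "nat \<Rightarrow> nat \<Rightarrow> (nat \<Rightarrow> nat \<Rightarrow> real) \<Rightarrow> real \<Rightarrow> (nat \<Rightarrow> nat \<Rightarrow> 'a::euclidean_space \<Rightarrow> 'a)
   \<Rightarrow> 'a gt_state \<Rightarrow> draws \<Rightarrow> 'a gt_state" where
  "gt_step n m W \<alpha> Df st d =
     (case st of (x, y, z, gp) \<Rightarrow>
       let g = saga_grad m Df st d;
           y' = (\<lambda>i. \<Sum>r<n. W i r *\<^sub>R (y r + g r - gp r));
           x' = (\<lambda>i. \<Sum>r<n. W i r *\<^sub>R (x r - \<alpha> *\<^sub>R y' r));
           z' = (\<lambda>i j. if j = snd (d i) then x i else z i j)
       in (x', y', z', g))"

primrec gt_saga ::
  "nat \<Rightarrow> nat \<Rightarrow> (nat \<Rightarrow> nat \<Rightarrow> real) \<Rightarrow> real \<Rightarrow> (nat \<Rightarrow> nat \<Rightarrow> 'a::euclidean_space \<Rightarrow> 'a) \<Rightarrow> 'a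
   \<Rightarrow> (nat \<Rightarrow> draws) \<Rightarrow> nat \<Rightarrow> 'a gt_state" where
  "gt_saga n m W \<alpha> Df x0 \<omega> 0 = (\<lambda>i. x0, \<lambda>i. 0, \<lambda>i j. x0, \<lambda>i. 0)"
| "gt_saga n m W \<alpha> Df x0 \<omega> (Suc k) = gt_step n m W \<alpha> Df (gt_saga n m W \<alpha> Df x0 \<omega> k) (\<omega> k)"

definition st_x :: "'a gt_state \<Rightarrow> nat \<Rightarrow> 'a" where "st_x st = fst st"
definition st_z :: "'a gt_state \<Rightarrow> nat \<Rightarrow> nat \<Rightarrow> 'a" where "st_z st = fst (snd (snd st))"

definition avg :: "nat \<Rightarrow> (nat \<Rightarrow> 'a::real_vector) \<Rightarrow> 'a" where
  "avg n v = (1 / real n) *\<^sub>R (\<Sum>i<n. v i)"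

definition t_gap :: "nat \<Rightarrow> nat \<Rightarrow> 'a::euclidean_space gt_state \<Rightarrow> real" where
  "t_gap n m st = (1 / real n) * (\<Sum>i<n. (1 / real m) *
       (\<Sum>j<m. (norm (avg n (st_x st) - st_z st i j))\<^sup>2))"

definition consensus_err :: "nat \<Rightarrow> 'a::euclidean_space gt_state \<Rightarrow> real" where
  "consensus_err n st = (\<Sum>i<n. (norm (st_x st i - avg n (st_x st)))\<^sup>2)"

definition avg_grad_sq :: "nat \<Rightarrow> nat \<Rightarrow> (nat \<Rightarrow> nat \<Rightarrow> 'a::euclidean_space \<Rightarrow> 'a) \<Rightarrow> 'a gt_state \<Rightarrow> real" where
  "avg_grad_sq n m Df st =
     (norm (avg n (\<lambda>i. (1 / real m) *\<^sub>R (\<Sum>j<m. Df i j (st_x st i)))))\<^sup>2"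

definition draw_space :: "nat \<Rightarrow> nat \<Rightarrow> draws measure" where
  "draw_space n m = PiM {..<n} (\<lambda>_. measure_pmf (pair_pmf (pmf_of_set {..<m}) (pmf_of_set {..<m})))"

definition run_space :: "nat \<Rightarrow> nat \<Rightarrow> (nat \<Rightarrow> draws) measure" where
  "run_space n m = PiM UNIV (\<lambda>_::nat. draw_space n m)"

definition filt :: "nat \<Rightarrow> nat \<Rightarrow> nat \<Rightarrow> (nat \<Rightarrow> draws) measure" where
  "filt n m k = vimage_algebra (space (run_space n m)) (\<lambda>\<omega>. restrict \<omega> {..<k})
                   (PiM {..<k} (\<lambda>_. draw_space n m))"

end

theory Submission
  imports Defs
begin


lemma pmf_E1:
  fixes \<phi> :: "'b \<Rightarrow> real"
  assumes "finite I" "i \<in> I"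
  shows "measure_pmf.expectation (Pi_pmf I dflt p) (\<lambda>d. \<phi> (d i)) = measure_pmf.expectation (p i) \<phi>"
proof -
  have "measure_pmf.expectation (Pi_pmf I dflt p) (\<lambda>d. \<phi> (d i)) =
        measure_pmf.expectation (map_pmf (\<lambda>d. d i) (Pi_pmf I dflt p)) \<phi>" by simp
  also have "map_pmf (\<lambda>d. d i) (Pi_pmf I dflt p) = p i" by (subst Pi_pmf_component[OF assms(1)]) (simp add: assms)
  finally show ?thesis .
qed

lemma map_Pi_pmf_two:
  assumes "finite I" "i \<in> I" "i' \<in> I" "i \<noteq> i'"
  shows "map_pmf (\<lambda>d. (d i, d i')) (Pi_pmf I dflt p) = pair_pmf (p i) (p i')"
proof -
  have sub: "Pi_pmf {i,i'} dflt p = map_pmf (\<lambda>f x. if x \<in> {i,i'} then f x else dflt) (Pi_pmf I dflt p)"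
    using assms by (intro Pi_pmf_subset) auto
  have "map_pmf (\<lambda>d. (d i, d i')) (Pi_pmf I dflt p) = map_pmf (\<lambda>d. (d i, d i')) (Pi_pmf {i,i'} dflt p)"
    unfolding sub pmf.map_comp o_def by simp
  also have "Pi_pmf {i,i'} dflt p = map_pmf (\<lambda>(y,f). f(i:=y)) (pair_pmf (p i) (Pi_pmf {i'} dflt p))"
    using assms by (intro Pi_pmf_insert) auto
  also have "map_pmf (\<lambda>d. (d i, d i')) \<dots> = map_pmf (\<lambda>(a, b). (id a, b i')) (pair_pmf (p i) (Pi_pmf {i'} dflt p))"
    unfolding pmf.map_comp o_def using assms by (intro pmf.map_cong) auto
  also have "\<dots> = pair_pmf (p i) (p i')"
    unfolding map_pair using Pi_pmf_component[of "{i'}" i' dflt p] by simp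
  finally show ?thesis .
qed

lemma pmf_E2:
  fixes \<phi> :: "'b \<Rightarrow> 'b \<Rightarrow> real"
  assumes "finite I" "i \<in> I" "i' \<in> I" "i \<noteq> i'"
  shows "measure_pmf.expectation (Pi_pmf I dflt p) (\<lambda>d. \<phi> (d i) (d i')) =
         measure_pmf.expectation (pair_pmf (p i) (p i')) (\<lambda>q. \<phi> (fst q) (snd q))"
proof -
  have "measure_pmf.expectation (Pi_pmf I dflt p) (\<lambda>d. \<phi> (d i) (d i')) =
        measure_pmf.expectation (map_pmf (\<lambda>d. (d i, d i')) (Pi_pmf I dflt p)) (\<lambda>q. \<phi> (fst q) (snd q))" by simp
  also have "\<dots> = measure_pmf.expectation (pair_pmf (p i) (p i')) (\<lambda>q. \<phi> (fst q) (snd q))"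
    unfolding map_Pi_pmf_two[OF assms] ..
  finally show ?thesis .
qed

lemma E_pmf_of_set_pair:
  fixes f :: "nat \<times> nat \<Rightarrow> real"
  assumes "m \<ge> 1"
  shows "measure_pmf.expectation (pair_pmf (pmf_of_set {..<m}) (pmf_of_set {..<m})) f
     = (\<Sum>a<m. \<Sum>b<m. f (a,b)) / (real m)^2"
proof -
  have "pair_pmf (pmf_of_set {..<m}) (pmf_of_set {..<m}) = pmf_of_set ({..<m} \<times> {..<m})"
  proof (intro pmf_eqI)
    fix q :: "nat \<times> nat"
    have z: "0 \<in> {..<m}" using assms by auto
    then have ne: "{..<m} \<noteq> {}" "{..<m} \<times> {..<m} \<noteq> {}" by blast+
    show "pmf (pair_pmf (pmf_of_set {..<m}) (pmf_of_set {..<m})) q = pmf (pmf_of_set ({..<m} \<times> {..<m})) q"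
      using ne by (cases q) (simp add: pmf_pair card_cartesian_product indicator_def)
  qed
  moreover have "0 \<in> {..<m}" using assms by auto
  then have "{..<m} \<noteq> {}" by blast
  ultimately show ?thesis using assms
    by (auto simp add: integral_pmf_of_set sum.cartesian_product power2_eq_square card_cartesian_product)
qed



lemma pair_pmf_of_set:
  assumes "finite A" "A \<noteq> {}" "finite B" "B \<noteq> {}"
  shows "pair_pmf (pmf_of_set A) (pmf_of_set B) = pmf_of_set (A \<times> B)"
proof (intro pmf_eqI)
  fix q :: "'a \<times> 'b"
  have ne: "A \<times> B \<noteq> {}" using assms by auto
  show "pmf (pair_pmf (pmf_of_set A) (pmf_of_set B)) q = pmf (pmf_of_set (A \<times> B)) q"
    using ne assms by (cases q) (simp add: pmf_pair card_cartesian_product indicator_def)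
qed

definition Qd :: "nat \<Rightarrow> (nat \<times> nat) pmf" where
  "Qd m = pair_pmf (pmf_of_set {..<m}) (pmf_of_set {..<m})"
definition Pd :: "nat \<Rightarrow> nat \<Rightarrow> draws pmf" where
  "Pd n m = Pi_pmf {..<n} undefined (\<lambda>_. Qd m)"

lemma lessThan_ne: "m \<ge> 1 \<Longrightarrow> {..<m::nat} \<noteq> {}"
proof -
  assume "m \<ge> 1" then have "0 \<in> {..<m}" by auto
  then show ?thesis by blast
qed

lemma Qd_eq: "m \<ge> 1 \<Longrightarrow> Qd m = pmf_of_set ({..<m} \<times> {..<m})"
  unfolding Qd_def using lessThan_ne by (intro pair_pmf_of_set) auto

lemma EQ:
  fixes f :: "nat \<times> nat \<Rightarrow> real"
  assumes "m \<ge> 1"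
  shows "measure_pmf.expectation (Qd m) f = (\<Sum>a<m. \<Sum>b<m. f (a,b)) / (real m)^2"
  unfolding Qd_def using E_pmf_of_set_pair[OF assms] .

lemma EQQ:
  fixes \<phi> :: "nat \<times> nat \<Rightarrow> nat \<times> nat \<Rightarrow> real"
  assumes "m \<ge> 1"
  shows "measure_pmf.expectation (pair_pmf (Qd m) (Qd m)) (\<lambda>q. \<phi> (fst q) (snd q))
     = (\<Sum>q1\<in>{..<m} \<times> {..<m}. \<Sum>q2\<in>{..<m} \<times> {..<m}. \<phi> q1 q2) / ((real m)^2)^2"
proof -
  have ne: "{..<m} \<times> {..<m} \<noteq> {}" using lessThan_ne[OF assms] by auto
  have "pair_pmf (Qd m) (Qd m) = pmf_of_set (({..<m} \<times> {..<m}) \<times> ({..<m} \<times> {..<m}))"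
    unfolding Qd_eq[OF assms] using ne by (intro pair_pmf_of_set) auto
  moreover have "({..<m} \<times> {..<m}) \<times> ({..<m} \<times> {..<m}) \<noteq> {}" using ne by auto
  moreover have "(\<Sum>q1\<in>{..<m} \<times> {..<m}. \<Sum>q2\<in>{..<m} \<times> {..<m}. \<phi> q1 q2) =
     (\<Sum>q\<in>({..<m} \<times> {..<m}) \<times> ({..<m} \<times> {..<m}). \<phi> (fst q) (snd q))"
    unfolding sum.cartesian_product case_prod_unfold ..
  ultimately show ?thesis
    by (simp add: integral_pmf_of_set card_cartesian_product power2_eq_square)
qed

lemma fin_Pd: "m \<ge> 1 \<Longrightarrow> finite (set_pmf (Pd n m))"
proof -
  assume m: "m \<ge> 1"
  have "finite (set_pmf (Qd m))" unfolding Qd_def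
    using lessThan_ne[OF m] by (simp add: set_pair_pmf) 
  then show ?thesis unfolding Pd_def by (simp add: set_Pi_pmf finite_PiE_dflt)
qed

lemma integrable_Pd: "m \<ge> 1 \<Longrightarrow> integrable (measure_pmf (Pd n m)) (f :: _ \<Rightarrow> real)"
  by (rule integrable_measure_pmf_finite[OF fin_Pd])

lemma E1:
  fixes \<phi> :: "nat \<times> nat \<Rightarrow> real"
  assumes "m \<ge> 1" "i < n"
  shows "measure_pmf.expectation (Pd n m) (\<lambda>d. \<phi> (d i)) = (\<Sum>a<m. \<Sum>b<m. \<phi> (a,b)) / (real m)^2"
  unfolding Pd_def using pmf_E1[of "{..<n}" i undefined "\<lambda>_. Qd m" \<phi>] assms EQ by simp

lemma E2:
  fixes \<phi> :: "nat \<times> nat \<Rightarrow> nat \<times> nat \<Rightarrow> real"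
  assumes "m \<ge> 1" "i < n" "i' < n" "i \<noteq> i'"
  shows "measure_pmf.expectation (Pd n m) (\<lambda>d. \<phi> (d i) (d i')) =
     (\<Sum>q1\<in>{..<m} \<times> {..<m}. \<Sum>q2\<in>{..<m} \<times> {..<m}. \<phi> q1 q2) / ((real m)^2)^2"
  unfolding Pd_def using pmf_E2[of "{..<n}" i i' undefined "\<lambda>_. Qd m" \<phi>] assms EQQ by simp



lemma sum_if_eq_nat:
  fixes X Z :: real
  assumes "j < m"
  shows "(\<Sum>b<m. if j = b then X else Z) = X + (real m - 1) * Z"
proof -
  have "(\<Sum>b<m. if j = b then X else Z) = (\<Sum>b<m. Z + (if j = b then X - Z else 0))"
    by (rule sum.cong) auto
  also have "\<dots> = real m * Z + (X - Z)" using assms by (simp add: sum.distrib)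
  finally show ?thesis by (simp add: algebra_simps)
qed

lemma sumS0:
  fixes v :: "nat \<Rightarrow> 'a::real_vector"
  assumes "(\<Sum>t<m. v t) = 0"
  shows "(\<Sum>q\<in>{..<m}\<times>{..<m}. v (fst q)) = 0"
proof -
  have "(\<Sum>q\<in>{..<m}\<times>{..<m}. v (fst q)) = (\<Sum>a<m. \<Sum>b<m. v a)"
    unfolding sum.cartesian_product case_prod_unfold ..
  also have "\<dots> = (\<Sum>a<m. real m *\<^sub>R v a)" by (intro sum.cong) (simp_all add: sum_constant_scaleR)
  also have "\<dots> = real m *\<^sub>R (\<Sum>a<m. v a)" by (simp add: scaleR_sum_right)
  finally show ?thesis using assms by simp
qed

lemma EA:
  fixes a :: "'a::real_inner"
  assumes m: "m \<ge> 1" and "i < n" "j < m"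
  shows "measure_pmf.expectation (Pd n m) (\<lambda>d. (norm (a - (if j = snd (d i) then x i else z i j)))\<^sup>2)
    = (1 / real m) * (norm (a - x i))\<^sup>2 + (1 - 1 / real m) * (norm (a - z i j))\<^sup>2"
proof -
  have "measure_pmf.expectation (Pd n m) (\<lambda>d. (norm (a - (if j = snd (d i) then x i else z i j)))\<^sup>2)
     = (\<Sum>t<m. \<Sum>b<m. (norm (a - (if j = snd (t,b) then x i else z i j)))\<^sup>2) / (real m)^2"
    using E1[OF m \<open>i < n\<close>, of "\<lambda>q. (norm (a - (if j = snd q then x i else z i j)))\<^sup>2"] by simp
  also have "\<dots> = (real m * ((norm (a - x i))\<^sup>2 + (real m - 1) * (norm (a - z i j))\<^sup>2)) / (real m)^2"
  proof -
    have "(\<Sum>b<m. (norm (a - (if j = b then x i else z i j)))\<^sup>2) =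
          (\<Sum>b<m. if j = b then (norm (a - x i))\<^sup>2 else (norm (a - z i j))\<^sup>2)"
      by (rule sum.cong) auto
    then show ?thesis using sum_if_eq_nat[OF \<open>j < m\<close>] by simp
  qed
  also have "\<dots> = (1 / real m) * (norm (a - x i))\<^sup>2 + (1 - 1 / real m) * (norm (a - z i j))\<^sup>2"
    using m by (simp add: field_simps power2_eq_square)
  finally show ?thesis .
qed

lemma EB:
  fixes a :: "'a::real_inner" and \<xi> :: "nat \<Rightarrow> nat \<Rightarrow> 'a"
  assumes m: "m \<ge> 1" and "i < n" "i' < n" and xi0: "(\<Sum>t<m. \<xi> i' t) = 0"
  shows "measure_pmf.expectation (Pd n m)
     (\<lambda>d. inner (a - (if j = snd (d i) then x i else z i j)) (\<xi> i' (fst (d i')))) = 0"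
proof (cases "i = i'")
  case True
  have "measure_pmf.expectation (Pd n m)
     (\<lambda>d. inner (a - (if j = snd (d i) then x i else z i j)) (\<xi> i' (fst (d i'))))
     = (\<Sum>t<m. \<Sum>b<m. inner (a - (if j = b then x i else z i j)) (\<xi> i t)) / (real m)^2"
    using E1[OF m \<open>i < n\<close>, of "\<lambda>q. inner (a - (if j = snd q then x i else z i j)) (\<xi> i (fst q))"] True by simp
  also have "(\<Sum>t<m. \<Sum>b<m. inner (a - (if j = b then x i else z i j)) (\<xi> i t))
     = (\<Sum>b<m. inner (a - (if j = b then x i else z i j)) (\<Sum>t<m. \<xi> i t))"
    by (subst sum.swap) (simp add: inner_sum_right)
  also have "\<dots> = 0" using xi0 True by simp
  finally show ?thesis by simp
next
  case False
  have "measure_pmf.expectation (Pd n m)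
     (\<lambda>d. inner (a - (if j = snd (d i) then x i else z i j)) (\<xi> i' (fst (d i'))))
     = (\<Sum>q1\<in>{..<m} \<times> {..<m}. \<Sum>q2\<in>{..<m} \<times> {..<m}.
          inner (a - (if j = snd q1 then x i else z i j)) (\<xi> i' (fst q2))) / ((real m)^2)^2"
    using E2[OF m \<open>i < n\<close> \<open>i' < n\<close> False,
      of "\<lambda>q1 q2. inner (a - (if j = snd q1 then x i else z i j)) (\<xi> i' (fst q2))"] by simp
  also have "(\<Sum>q1\<in>{..<m} \<times> {..<m}. \<Sum>q2\<in>{..<m} \<times> {..<m}.
          inner (a - (if j = snd q1 then x i else z i j)) (\<xi> i' (fst q2)))
     = (\<Sum>q1\<in>{..<m} \<times> {..<m}. inner (a - (if j = snd q1 then x i else z i j))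
          (\<Sum>q2\<in>{..<m} \<times> {..<m}. \<xi> i' (fst q2)))"
    by (simp add: inner_sum_right)
  also have "\<dots> = 0" using sumS0[OF xi0] by simp
  finally show ?thesis by simp
qed

lemma EC:
  fixes \<xi> :: "nat \<Rightarrow> nat \<Rightarrow> 'a::real_inner"
  assumes m: "m \<ge> 1" and "i1 < n" "i2 < n" and xi0: "\<And>i. i < n \<Longrightarrow> (\<Sum>t<m. \<xi> i t) = 0"
  shows "measure_pmf.expectation (Pd n m)
     (\<lambda>d. inner (\<xi> i1 (fst (d i1))) (\<xi> i2 (fst (d i2))))
     = (if i1 = i2 then (\<Sum>t<m. (norm (\<xi> i1 t))\<^sup>2) / real m else 0)"
proof (cases "i1 = i2")
  case True
  have "measure_pmf.expectation (Pd n m) (\<lambda>d. inner (\<xi> i1 (fst (d i1))) (\<xi> i2 (fst (d i2))))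
     = (\<Sum>t<m. \<Sum>b<m. (norm (\<xi> i1 t))\<^sup>2) / (real m)^2"
    using E1[OF m \<open>i1 < n\<close>, of "\<lambda>q. (norm (\<xi> i1 (fst q)))\<^sup>2"] True by (simp add: power2_norm_eq_inner)
  also have "\<dots> = (\<Sum>t<m. (norm (\<xi> i1 t))\<^sup>2) / real m"
    using m by (simp add: sum_distrib_left[symmetric] power2_eq_square)
  finally show ?thesis using True by simp
next
  case False
  have "measure_pmf.expectation (Pd n m) (\<lambda>d. inner (\<xi> i1 (fst (d i1))) (\<xi> i2 (fst (d i2))))
     = (\<Sum>q1\<in>{..<m} \<times> {..<m}. \<Sum>q2\<in>{..<m} \<times> {..<m}.
          inner (\<xi> i1 (fst q1)) (\<xi> i2 (fst q2))) / ((real m)^2)^2"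
    using E2[OF m \<open>i1 < n\<close> \<open>i2 < n\<close> False,
      of "\<lambda>q1 q2. inner (\<xi> i1 (fst q1)) (\<xi> i2 (fst q2))"] by simp
  also have "(\<Sum>q1\<in>{..<m} \<times> {..<m}. \<Sum>q2\<in>{..<m} \<times> {..<m}. inner (\<xi> i1 (fst q1)) (\<xi> i2 (fst q2)))
     = (\<Sum>q1\<in>{..<m} \<times> {..<m}. inner (\<xi> i1 (fst q1)) (\<Sum>q2\<in>{..<m} \<times> {..<m}. \<xi> i2 (fst q2)))"
    by (simp add: inner_sum_right)
  also have "\<dots> = 0" using sumS0[OF xi0[OF \<open>i2 < n\<close>]] by simp
  finally show ?thesis using False by simp
qed

lemma norm_expand:
  fixes u :: "'a::real_inner" and v :: "nat \<Rightarrow> 'a"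
  shows "(norm (u - \<alpha> *\<^sub>R ((1 / real n) *\<^sub>R (\<Sum>i\<in>I. v i))))\<^sup>2
    = (norm u)\<^sup>2 - 2 * \<alpha> * ((1 / real n) * (\<Sum>i\<in>I. inner u (v i)))
      + \<alpha>\<^sup>2 * ((1 / real n)\<^sup>2 * (\<Sum>i1\<in>I. \<Sum>i2\<in>I. inner (v i1) (v i2)))"
proof -
  define w where "w = \<alpha> *\<^sub>R ((1 / real n) *\<^sub>R (\<Sum>i\<in>I. v i))"
  have 1: "(norm (u - w))\<^sup>2 = (norm u)\<^sup>2 - 2 * inner u w + (norm w)\<^sup>2"
    by (simp add: power2_norm_eq_inner inner_diff_left inner_diff_right inner_commute)
  have 2: "inner u w = \<alpha> * ((1 / real n) * (\<Sum>i\<in>I. inner u (v i)))"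
    unfolding w_def by (simp add: inner_sum_right)
  have 3: "(norm w)\<^sup>2 = \<alpha>\<^sup>2 * ((1 / real n)\<^sup>2 * (\<Sum>i1\<in>I. \<Sum>i2\<in>I. inner (v i1) (v i2)))"
    unfolding w_def power2_norm_eq_inner
    by (simp add: inner_sum_right inner_sum_left power2_eq_square sum_distrib_left algebra_simps inner_commute)
  show ?thesis using 1 2 3 unfolding w_def by simp
qed



lemma expect_core:
  fixes a :: "'a::real_inner" and \<xi> :: "nat \<Rightarrow> nat \<Rightarrow> 'a"
  assumes m: "m \<ge> 1" and xi0: "\<And>i. i < n \<Longrightarrow> (\<Sum>t<m. \<xi> i t) = 0"
  shows "measure_pmf.expectation (Pd n m) (\<lambda>d. (1 / real n) * (\<Sum>i<n. (1 / real m) * (\<Sum>j<m.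
      (norm ((a - (if j = snd (d i) then x i else z i j)) - \<alpha> *\<^sub>R ((1 / real n) *\<^sub>R (\<Sum>i'<n. \<xi> i' (fst (d i'))))))\<^sup>2)))
   = (1 / real n) * (\<Sum>i<n. (1 / real m) * (\<Sum>j<m. (1 / real m) * (norm (a - x i))\<^sup>2 + (1 - 1 / real m) * (norm (a - z i j))\<^sup>2))
     + \<alpha>\<^sup>2 * (1 / real n)\<^sup>2 * (\<Sum>i<n. (\<Sum>t<m. (norm (\<xi> i t))\<^sup>2) / real m)"
proof -
  note int = integrable_Pd[OF m]
  define E where "E = (\<lambda>f :: draws \<Rightarrow> real. measure_pmf.expectation (Pd n m) f)"
  define A where "A = (\<lambda>i j (d::draws). (norm (a - (if j = snd (d i) then x i else z i j)))\<^sup>2)"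
  define B where "B = (\<lambda>i j i' (d::draws). inner (a - (if j = snd (d i) then x i else z i j)) (\<xi> i' (fst (d i'))))"
  define C where "C = (\<lambda>i1 i2 (d::draws). inner (\<xi> i1 (fst (d i1))) (\<xi> i2 (fst (d i2))))"
  have EB': "\<And>i i' j. i < n \<Longrightarrow> i' < n \<Longrightarrow> E (B i j i') = 0"
    unfolding E_def B_def by (rule EB[OF m _ _ xi0])
  have EC': "\<And>i1 i2. i1 < n \<Longrightarrow> i2 < n \<Longrightarrow> E (C i1 i2)
     = (if i1 = i2 then (\<Sum>t<m. (norm (\<xi> i1 t))\<^sup>2) / real m else 0)"
    unfolding E_def C_def by (rule EC[OF m _ _ xi0])
  have EA': "\<And>i j. i < n \<Longrightarrow> j < m \<Longrightarrow> E (A i j)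
    = (1 / real m) * (norm (a - x i))\<^sup>2 + (1 - 1 / real m) * (norm (a - z i j))\<^sup>2"
    unfolding E_def A_def by (rule EA[OF m])
  have Esum: "\<And>I (f :: nat \<Rightarrow> _ \<Rightarrow> real). E (\<lambda>d. \<Sum>i\<in>I. f i d) = (\<Sum>i\<in>I. E (f i))"
    unfolding E_def by (rule Bochner_Integration.integral_sum[OF int])
  have Emult: "\<And>c f. E (\<lambda>d. c * f d) = c * E f" unfolding E_def by simp
  have Eadd: "\<And>f g. E (\<lambda>d. f d + g d) = E f + E g" unfolding E_def by (rule Bochner_Integration.integral_add[OF int int])
  have Ediff: "\<And>f g. E (\<lambda>d. f d - g d) = E f - E g" unfolding E_def by (rule Bochner_Integration.integral_diff[OF int int])
  have pw: "\<And>d i j. (norm ((a - (if j = snd (d i) then x i else z i j)) - \<alpha> *\<^sub>R ((1 / real n) *\<^sub>R (\<Sum>i'<n. \<xi> i' (fst (d i'))))))\<^sup>2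
     = A i j d - 2 * \<alpha> * ((1 / real n) * (\<Sum>i'<n. B i j i' d)) + \<alpha>\<^sup>2 * ((1 / real n)\<^sup>2 * (\<Sum>i1<n. \<Sum>i2<n. C i1 i2 d))"
    unfolding A_def B_def C_def by (rule norm_expand)
  have inner: "\<And>i j. i < n \<Longrightarrow> j < m \<Longrightarrow>
     E (\<lambda>d. A i j d - 2 * \<alpha> * ((1 / real n) * (\<Sum>i'<n. B i j i' d)) + \<alpha>\<^sup>2 * ((1 / real n)\<^sup>2 * (\<Sum>i1<n. \<Sum>i2<n. C i1 i2 d)))
     = (1 / real m) * (norm (a - x i))\<^sup>2 + (1 - 1 / real m) * (norm (a - z i j))\<^sup>2
       + \<alpha>\<^sup>2 * ((1 / real n)\<^sup>2 * (\<Sum>i<n. (\<Sum>t<m. (norm (\<xi> i t))\<^sup>2) / real m))"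
  proof -
    fix i j assume ij: "i < n" "j < m"
    have "E (\<lambda>d. A i j d - 2 * \<alpha> * ((1 / real n) * (\<Sum>i'<n. B i j i' d)) + \<alpha>\<^sup>2 * ((1 / real n)\<^sup>2 * (\<Sum>i1<n. \<Sum>i2<n. C i1 i2 d)))
       = E (A i j) - 2 * \<alpha> * ((1 / real n) * (\<Sum>i'<n. E (B i j i'))) + \<alpha>\<^sup>2 * ((1 / real n)\<^sup>2 * (\<Sum>i1<n. \<Sum>i2<n. E (C i1 i2)))"
      unfolding Eadd Ediff Emult Esum ..
    also have "(\<Sum>i'<n. E (B i j i')) = 0" using EB' ij by simp
    also have "(\<Sum>i1<n. \<Sum>i2<n. E (C i1 i2)) = (\<Sum>i<n. (\<Sum>t<m. (norm (\<xi> i t))\<^sup>2) / real m)"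
    proof (intro sum.cong refl)
      fix i1 assume "i1 \<in> {..<n}"
      then have "(\<Sum>i2<n. E (C i1 i2)) = (\<Sum>i2<n. if i1 = i2 then (\<Sum>t<m. (norm (\<xi> i1 t))\<^sup>2) / real m else 0)"
        using EC' by (intro sum.cong refl) auto
      also have "\<dots> = (\<Sum>t<m. (norm (\<xi> i1 t))\<^sup>2) / real m" using \<open>i1 \<in> {..<n}\<close> by (simp add: sum.delta)
      finally show "(\<Sum>i2<n. E (C i1 i2)) = (\<Sum>t<m. (norm (\<xi> i1 t))\<^sup>2) / real m" .
    qed
    finally show "?thesis i j" using EA' ij by simp
  qed
  have "E (\<lambda>d. (1 / real n) * (\<Sum>i<n. (1 / real m) * (\<Sum>j<m.
      (norm ((a - (if j = snd (d i) then x i else z i j)) - \<alpha> *\<^sub>R ((1 / real n) *\<^sub>R (\<Sum>i'<n. \<xi> i' (fst (d i'))))))\<^sup>2)))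
    = (1 / real n) * (\<Sum>i<n. (1 / real m) * (\<Sum>j<m.
       E (\<lambda>d. A i j d - 2 * \<alpha> * ((1 / real n) * (\<Sum>i'<n. B i j i' d)) + \<alpha>\<^sup>2 * ((1 / real n)\<^sup>2 * (\<Sum>i1<n. \<Sum>i2<n. C i1 i2 d)))))"
    unfolding pw Emult Esum ..
  also have "\<dots> = (1 / real n) * (\<Sum>i<n. (1 / real m) * (\<Sum>j<m.
       (1 / real m) * (norm (a - x i))\<^sup>2 + (1 - 1 / real m) * (norm (a - z i j))\<^sup>2
       + \<alpha>\<^sup>2 * ((1 / real n)\<^sup>2 * (\<Sum>i<n. (\<Sum>t<m. (norm (\<xi> i t))\<^sup>2) / real m))))"
    using inner by (intro arg_cong[where f="\<lambda>t. (1 / real n) * t"] sum.cong refl arg_cong[where f="\<lambda>t. (1 / real m) * t"]) auto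
  also have "\<dots> = (1 / real n) * (\<Sum>i<n. (1 / real m) * (\<Sum>j<m. (1 / real m) * (norm (a - x i))\<^sup>2 + (1 - 1 / real m) * (norm (a - z i j))\<^sup>2))
     + \<alpha>\<^sup>2 * (1 / real n)\<^sup>2 * (\<Sum>i<n. (\<Sum>t<m. (norm (\<xi> i t))\<^sup>2) / real m)"
  proof -
    define K where "K = \<alpha>\<^sup>2 * ((1 / real n)\<^sup>2 * (\<Sum>i<n. (\<Sum>t<m. (norm (\<xi> i t))\<^sup>2) / real m))"
    define P where "P = (\<lambda>i j. (1 / real m) * (norm (a - x i))\<^sup>2 + (1 - 1 / real m) * (norm (a - z i j))\<^sup>2)"
    have e1: "\<And>i. (1 / real m) * (\<Sum>j<m. P i j + K) = (1 / real m) * (\<Sum>j<m. P i j) + K"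
      using m by (simp add: sum.distrib field_simps)
    have e2: "(\<Sum>i<n. (1 / real m) * (\<Sum>j<m. P i j + K)) = (\<Sum>i<n. (1 / real m) * (\<Sum>j<m. P i j)) + real n * K"
      unfolding e1 by (simp add: sum.distrib)
    have "(1 / real n) * (\<Sum>i<n. (1 / real m) * (\<Sum>j<m. P i j + K)) = (1 / real n) * (\<Sum>i<n. (1 / real m) * (\<Sum>j<m. P i j)) + K"
    proof (cases "n = 0")
      case True then show ?thesis unfolding K_def by simp
    next
      case False then show ?thesis unfolding e2 by (simp add: field_simps)
    qed
    then show ?thesis unfolding K_def P_def by (simp only: mult.assoc)
  qed
  finally show ?thesis unfolding E_def .
qed



lemma avg_sq_le:
  fixes v :: "nat \<Rightarrow> 'a::real_normed_vector"
  assumes "K \<ge> 1"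
  shows "(norm ((1 / real K) *\<^sub>R (\<Sum>i<K. v i)))\<^sup>2 \<le> (1 / real K) * (\<Sum>i<K. (norm (v i))\<^sup>2)"
proof -
  have "norm (\<Sum>i<K. v i) \<le> (\<Sum>i<K. norm (v i))" by (rule norm_sum)
  then have "(norm (\<Sum>i<K. v i))\<^sup>2 \<le> (\<Sum>i<K. norm (v i))\<^sup>2"
    by (intro power_mono) auto
  also have "\<dots> \<le> (\<Sum>i<K. (norm (v i))\<^sup>2) * real K"
    using sum_squared_le_sum_of_squares[of "\<lambda>i. norm (v i)" "{..<K}"] by simp
  finally have *: "(norm (\<Sum>i<K. v i))\<^sup>2 \<le> (\<Sum>i<K. (norm (v i))\<^sup>2) * real K" .
  have "(norm ((1 / real K) *\<^sub>R (\<Sum>i<K. v i)))\<^sup>2 = (1 / real K)\<^sup>2 * (norm (\<Sum>i<K. v i))\<^sup>2"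
    by (simp add: power_mult_distrib power_divide)
  also have "\<dots> \<le> (1 / real K)\<^sup>2 * ((\<Sum>i<K. (norm (v i))\<^sup>2) * real K)"
    by (intro mult_left_mono *) auto
  also have "\<dots> = (1 / real K) * (\<Sum>i<K. (norm (v i))\<^sup>2)"
    using assms by (simp add: power2_eq_square field_simps)
  finally show ?thesis .
qed

lemma norm_sq_diff:
  fixes u v :: "'a::real_inner"
  shows "(norm (u - v))\<^sup>2 = (norm u)\<^sup>2 - 2 * inner u v + (norm v)\<^sup>2"
  by (simp add: power2_norm_eq_inner inner_diff_left inner_diff_right inner_commute)

lemma norm_sq_add_le:
  fixes u v :: "'a::real_inner"
  shows "(norm (u + v))\<^sup>2 \<le> 2 * (norm u)\<^sup>2 + 2 * (norm v)\<^sup>2"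
proof -
  have "(norm (u + v))\<^sup>2 + (norm (u - v))\<^sup>2 = 2 * (norm u)\<^sup>2 + 2 * (norm v)\<^sup>2"
    by (simp add: power2_norm_eq_inner inner_diff_left inner_diff_right inner_add_left inner_add_right inner_commute)
  then show ?thesis by (smt (verit) zero_le_power2)
qed

lemma amgm_beta:
  fixes p q \<beta> :: real
  assumes "\<beta> > 0"
  shows "2 * p * q \<le> \<beta> * p\<^sup>2 + q\<^sup>2 / \<beta>"
proof -
  have "0 \<le> \<beta> * (p - q / \<beta>)\<^sup>2" using assms by simp
  also have "\<beta> * (p - q / \<beta>)\<^sup>2 = \<beta> * p\<^sup>2 - 2 * p * q + q\<^sup>2 / \<beta>"
    using assms by (simp add: power2_eq_square field_simps)
  finally show ?thesis by simp
qed



lemma ineq_core: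
  fixes x :: "nat \<Rightarrow> 'a::real_inner" and z :: "nat \<Rightarrow> nat \<Rightarrow> 'a" and \<xi> :: "nat \<Rightarrow> nat \<Rightarrow> 'a" and Gb :: 'a
  assumes n: "n \<ge> 1" and m: "m \<ge> 1" and \<alpha>: "\<alpha> > 0" and \<beta>: "\<beta> > 0"
    and xi_bd: "\<And>i. i < n \<Longrightarrow> (\<Sum>t<m. (norm (\<xi> i t))\<^sup>2) / real m \<le> L\<^sup>2 * ((\<Sum>t<m. (norm (x i - z i t))\<^sup>2) / real m)"
    and xb: "xb = (1 / real n) *\<^sub>R (\<Sum>i<n. x i)"
  shows "(1 / real n) * (\<Sum>i<n. (1 / real m) * (\<Sum>j<m. (1 / real m) * (norm ((xb - \<alpha> *\<^sub>R Gb) - x i))\<^sup>2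
            + (1 - 1 / real m) * (norm ((xb - \<alpha> *\<^sub>R Gb) - z i j))\<^sup>2))
          + \<alpha>\<^sup>2 * (1 / real n)\<^sup>2 * (\<Sum>i<n. (\<Sum>t<m. (norm (\<xi> i t))\<^sup>2) / real m)
   \<le> (1 - 1 / real m + \<alpha> * \<beta> + 2 * \<alpha>\<^sup>2 * L\<^sup>2 / real n) * ((1 / real n) * (\<Sum>i<n. (1 / real m) * (\<Sum>j<m. (norm (xb - z i j))\<^sup>2)))
     + (2 * \<alpha>\<^sup>2 + \<alpha> / \<beta>) * (norm Gb)\<^sup>2
     + (2 * \<alpha>\<^sup>2 * L\<^sup>2 / real n + 2 / real m) * (1 / real n) * (\<Sum>i<n. (norm (x i - xb))\<^sup>2)"
proof -
  define rn where "rn = real n"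
  define rm where "rm = real m"
  have rn: "rn \<ge> 1" using n unfolding rn_def by simp
  have rm: "rm \<ge> 1" using m unfolding rm_def by simp
  define a where "a = xb - \<alpha> *\<^sub>R Gb"
  define T where "T = (1 / rn) * (\<Sum>i<n. (1 / rm) * (\<Sum>j<m. (norm (xb - z i j))\<^sup>2))"
  define C where "C = (\<Sum>i<n. (norm (x i - xb))\<^sup>2)"
  define \<Gamma> where "\<Gamma> = (norm Gb)\<^sup>2"
  define \<Xi> where "\<Xi> = (\<Sum>i<n. (\<Sum>t<m. (norm (\<xi> i t))\<^sup>2) / rm)"
  define w where "w = (1 / rn) *\<^sub>R (\<Sum>i<n. (1 / rm) *\<^sub>R (\<Sum>j<m. xb - z i j))"
  define ip where "ip = inner w Gb"
  define Sx where "Sx = (\<Sum>i<n. (norm (a - x i))\<^sup>2)"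
  define Sz where "Sz = (\<Sum>i<n. (1 / rm) * (\<Sum>j<m. (norm (a - z i j))\<^sup>2))"
  have T0: "T \<ge> 0" "C \<ge> 0" "\<Gamma> \<ge> 0" unfolding T_def C_def \<Gamma>_def using rn rm
    by (auto intro!: sum_nonneg divide_nonneg_nonneg mult_nonneg_nonneg)
  have s1: "(1 / rn) * (\<Sum>i<n. (1 / rm) * (\<Sum>j<m. (1 / rm) * (norm (a - x i))\<^sup>2 + (1 - 1 / rm) * (norm (a - z i j))\<^sup>2))
      = (1 / rm) * ((1 / rn) * Sx) + (1 - 1 / rm) * ((1 / rn) * Sz)"
  proof -
    have "\<And>i. (1 / rm) * (\<Sum>j<m. (1 / rm) * (norm (a - x i))\<^sup>2 + (1 - 1 / rm) * (norm (a - z i j))\<^sup>2)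
       = (1 / rm) * (norm (a - x i))\<^sup>2 + (1 - 1 / rm) * ((1 / rm) * (\<Sum>j<m. (norm (a - z i j))\<^sup>2))"
    proof -
      fix i
      have h: "(\<Sum>j<m. (1 / rm) * (norm (a - x i))\<^sup>2 + (1 - 1 / rm) * (norm (a - z i j))\<^sup>2)
          = rm * ((1 / rm) * (norm (a - x i))\<^sup>2) + (1 - 1 / rm) * (\<Sum>j<m. (norm (a - z i j))\<^sup>2)"
        by (simp add: sum.distrib sum_distrib_left rm_def)
      have h2: "\<And>X S c. (1 / rm) * (rm * ((1 / rm) * X) + c * S) = (1 / rm) * X + c * ((1 / rm) * S)"
        using rm by (simp add: field_simps)
      show "?thesis i" unfolding h h2 ..
    qed
    note pi = this
    show ?thesis unfolding Sx_def Sz_def pi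
      by (simp only: sum.distrib sum_distrib_left[symmetric]) (use rn rm in \<open>simp add: field_simps\<close>)
  qed
  have sumx: "(\<Sum>i<n. xb - x i) = 0"
  proof -
    have "(\<Sum>i<n. xb - x i) = rn *\<^sub>R xb - (\<Sum>i<n. x i)" by (simp add: sum_subtractf rn_def sum_constant_scaleR)
    also have "rn *\<^sub>R xb = (\<Sum>i<n. x i)" unfolding xb using rn by (simp add: rn_def)
    finally show ?thesis by simp
  qed
  have s2: "Sx = C + rn * (\<alpha>\<^sup>2 * \<Gamma>)"
  proof -
    have "\<And>i. (norm (a - x i))\<^sup>2 = (norm (x i - xb))\<^sup>2 - 2 * \<alpha> * inner (xb - x i) Gb + \<alpha>\<^sup>2 * \<Gamma>"
    proof -
      fix i
      have eq: "a - x i = (xb - x i) - \<alpha> *\<^sub>R Gb" unfolding a_def by (simp add: algebra_simps)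
      show "?thesis i" unfolding eq norm_sq_diff[of "xb - x i" "\<alpha> *\<^sub>R Gb"] \<Gamma>_def
        by (simp add: norm_minus_commute power_mult_distrib)
    qed
    then have "Sx = C - 2 * \<alpha> * (\<Sum>i<n. inner (xb - x i) Gb) + rn * (\<alpha>\<^sup>2 * \<Gamma>)"
      unfolding Sx_def C_def rn_def by (simp add: sum.distrib sum_subtractf sum_distrib_left)
    also have "(\<Sum>i<n. inner (xb - x i) Gb) = 0" using sumx by (simp add: inner_sum_left[symmetric])
    finally show ?thesis by simp
  qed
  have s3: "Sz = rn * T - 2 * \<alpha> * (rn * ip) + rn * (\<alpha>\<^sup>2 * \<Gamma>)"
  proof -
    have pj: "\<And>i j. (norm (a - z i j))\<^sup>2 = (norm (xb - z i j))\<^sup>2 - 2 * \<alpha> * inner (xb - z i j) Gb + \<alpha>\<^sup>2 * \<Gamma>"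
    proof -
      fix i j
      have eq: "a - z i j = (xb - z i j) - \<alpha> *\<^sub>R Gb" unfolding a_def by (simp add: algebra_simps)
      show "?thesis i j" unfolding eq norm_sq_diff[of "xb - z i j" "\<alpha> *\<^sub>R Gb"] \<Gamma>_def
        by (simp add: power_mult_distrib)
    qed
    have e: "\<And>i. (1 / rm) * (\<Sum>j<m. (norm (a - z i j))\<^sup>2) = (1 / rm) * (\<Sum>j<m. (norm (xb - z i j))\<^sup>2)
       - 2 * \<alpha> * inner ((1 / rm) *\<^sub>R (\<Sum>j<m. xb - z i j)) Gb + \<alpha>\<^sup>2 * \<Gamma>"
    proof -
      fix i
      have "(\<Sum>j<m. (norm (a - z i j))\<^sup>2) = (\<Sum>j<m. (norm (xb - z i j))\<^sup>2)
         - 2 * \<alpha> * (\<Sum>j<m. inner (xb - z i j) Gb) + rm * (\<alpha>\<^sup>2 * \<Gamma>)"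
        unfolding pj rm_def by (simp add: sum.distrib sum_subtractf sum_distrib_left)
      then show "?thesis i" using rm by (simp add: inner_sum_left field_simps)
    qed
    have "Sz = (\<Sum>i<n. (1 / rm) * (\<Sum>j<m. (norm (xb - z i j))\<^sup>2))
       - 2 * \<alpha> * inner (\<Sum>i<n. (1 / rm) *\<^sub>R (\<Sum>j<m. xb - z i j)) Gb + rn * (\<alpha>\<^sup>2 * \<Gamma>)"
      unfolding Sz_def e rn_def by (simp add: sum.distrib sum_subtractf sum_distrib_left inner_sum_left)
    also have "(\<Sum>i<n. (1 / rm) * (\<Sum>j<m. (norm (xb - z i j))\<^sup>2)) = rn * T"
      unfolding T_def using rn by simp
    also have "(\<Sum>i<n. (1 / rm) *\<^sub>R (\<Sum>j<m. xb - z i j)) = rn *\<^sub>R w"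
      unfolding w_def using rn by simp
    finally show ?thesis unfolding ip_def by simp
  qed
  have s4: "(norm w)\<^sup>2 \<le> T"
  proof -
    have "(norm w)\<^sup>2 \<le> (1 / rn) * (\<Sum>i<n. (norm ((1 / rm) *\<^sub>R (\<Sum>j<m. xb - z i j)))\<^sup>2)"
      unfolding w_def rn_def by (rule avg_sq_le[OF n])
    also have "\<dots> \<le> T" unfolding T_def
    proof (intro mult_left_mono sum_mono)
      fix i
      show "(norm ((1 / rm) *\<^sub>R (\<Sum>j<m. xb - z i j)))\<^sup>2 \<le> (1 / rm) * (\<Sum>j<m. (norm (xb - z i j))\<^sup>2)"
        unfolding rm_def by (rule avg_sq_le[OF m])
    qed (use rn in auto)
    finally show ?thesis .
  qed
  have s5: "\<Xi> \<le> 2 * L\<^sup>2 * C + 2 * L\<^sup>2 * (rn * T)"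
  proof -
    have "\<Xi> \<le> (\<Sum>i<n. L\<^sup>2 * ((\<Sum>t<m. (norm (x i - z i t))\<^sup>2) / rm))"
      unfolding \<Xi>_def rm_def using xi_bd by (intro sum_mono) auto
    also have "\<dots> \<le> (\<Sum>i<n. L\<^sup>2 * ((\<Sum>t<m. 2 * (norm (x i - xb))\<^sup>2 + 2 * (norm (xb - z i t))\<^sup>2) / rm))"
    proof (intro sum_mono mult_left_mono divide_right_mono)
      fix i t
      have "x i - z i t = (x i - xb) + (xb - z i t)" by simp
      then show "(norm (x i - z i t))\<^sup>2 \<le> 2 * (norm (x i - xb))\<^sup>2 + 2 * (norm (xb - z i t))\<^sup>2"
        using norm_sq_add_le[of "x i - xb" "xb - z i t"] by simp
    qed (use rm in auto)
    also have "\<dots> = (\<Sum>i<n. 2 * L\<^sup>2 * (norm (x i - xb))\<^sup>2 + 2 * L\<^sup>2 * ((1 / rm) * (\<Sum>t<m. (norm (xb - z i t))\<^sup>2)))"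
      using rm by (intro sum.cong refl) (simp add: sum.distrib sum_distrib_left[symmetric] rm_def field_simps)
    also have "\<dots> = 2 * L\<^sup>2 * C + 2 * L\<^sup>2 * (rn * T)"
      unfolding C_def T_def using rn by (simp add: sum.distrib sum_distrib_left)
    finally show ?thesis .
  qed
  have eqL: "(1 / rn) * (\<Sum>i<n. (1 / rm) * (\<Sum>j<m. (1 / rm) * (norm (a - x i))\<^sup>2 + (1 - 1 / rm) * (norm (a - z i j))\<^sup>2))
      + \<alpha>\<^sup>2 * (1 / rn)\<^sup>2 * \<Xi>
      = (1 / rm) * ((1 / rn) * C) + \<alpha>\<^sup>2 * \<Gamma> + (1 - 1 / rm) * T - 2 * \<alpha> * (1 - 1 / rm) * ip + \<alpha>\<^sup>2 * (1 / rn)\<^sup>2 * \<Xi>"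
  proof -
    have a1: "(1 / rn) * (C + rn * (\<alpha>\<^sup>2 * \<Gamma>)) = (1 / rn) * C + \<alpha>\<^sup>2 * \<Gamma>"
      using rn by (simp add: distrib_left)
    have a2: "(1 / rn) * (rn * T - 2 * \<alpha> * (rn * ip) + rn * (\<alpha>\<^sup>2 * \<Gamma>)) = T - 2 * \<alpha> * ip + \<alpha>\<^sup>2 * \<Gamma>"
      using rn by (simp add: distrib_left right_diff_distrib)
    show ?thesis unfolding s1 s2 s3 a1 a2 by (simp add: algebra_simps)
  qed
  have i1: "- (2 * \<alpha> * (1 - 1 / rm) * ip) \<le> \<alpha> * \<beta> * T + \<alpha> / \<beta> * \<Gamma>"
  proof -
    have c1: "\<bar>ip\<bar> \<le> norm w * norm Gb" unfolding ip_def by (rule Cauchy_Schwarz_ineq2)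
    have c2: "0 \<le> 1 - 1 / rm" "1 - 1 / rm \<le> 1" using rm by auto
    have "- (2 * \<alpha> * (1 - 1 / rm) * ip) \<le> 2 * \<alpha> * (1 - 1 / rm) * \<bar>ip\<bar>"
    proof -
      have k: "0 \<le> 2 * \<alpha> * (1 - 1 / rm)" using \<alpha> c2 by simp
      have "- (2 * \<alpha> * (1 - 1 / rm) * ip) = 2 * \<alpha> * (1 - 1 / rm) * (- ip)" by simp
      also have "\<dots> \<le> 2 * \<alpha> * (1 - 1 / rm) * \<bar>ip\<bar>" by (rule mult_left_mono[OF _ k]) simp
      finally show ?thesis .
    qed
    also have "\<dots> \<le> 2 * \<alpha> * 1 * (norm w * norm Gb)"
      using \<alpha> c1 c2 by (intro mult_mono) auto
    also have "\<dots> = \<alpha> * (2 * norm w * norm Gb)" by simp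
    also have "\<dots> \<le> \<alpha> * (\<beta> * (norm w)\<^sup>2 + (norm Gb)\<^sup>2 / \<beta>)"
      using \<alpha> amgm_beta[OF \<beta>] by (intro mult_left_mono) auto
    also have "\<dots> \<le> \<alpha> * (\<beta> * T + \<Gamma> / \<beta>)"
      unfolding \<Gamma>_def using \<alpha> \<beta> s4 by (intro mult_left_mono add_right_mono) auto
    finally show ?thesis by (simp add: algebra_simps)
  qed
  have i2: "\<alpha>\<^sup>2 * (1 / rn)\<^sup>2 * \<Xi> \<le> (2 * \<alpha>\<^sup>2 * L\<^sup>2 / rn) * ((1 / rn) * C) + (2 * \<alpha>\<^sup>2 * L\<^sup>2 / rn) * T"
  proof -
    have "\<alpha>\<^sup>2 * (1 / rn)\<^sup>2 * \<Xi> \<le> \<alpha>\<^sup>2 * (1 / rn)\<^sup>2 * (2 * L\<^sup>2 * C + 2 * L\<^sup>2 * (rn * T))"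
      using s5 by (intro mult_left_mono) auto
    also have "\<dots> = (2 * \<alpha>\<^sup>2 * L\<^sup>2 / rn) * ((1 / rn) * C) + (2 * \<alpha>\<^sup>2 * L\<^sup>2 / rn) * T"
      using rn by (simp add: field_simps power2_eq_square)
    finally show ?thesis .
  qed
  have i3: "(1 / rm) * ((1 / rn) * C) \<le> (2 / rm) * ((1 / rn) * C)"
    using T0 rn rm by (intro mult_right_mono) (auto simp: divide_right_mono)
  have i4: "\<alpha>\<^sup>2 * \<Gamma> \<le> 2 * \<alpha>\<^sup>2 * \<Gamma>" using T0 by simp
  have eqR: "(1 - 1 / rm + \<alpha> * \<beta> + 2 * \<alpha>\<^sup>2 * L\<^sup>2 / rn) * T + (2 * \<alpha>\<^sup>2 + \<alpha> / \<beta>) * \<Gamma>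
     + (2 * \<alpha>\<^sup>2 * L\<^sup>2 / rn + 2 / rm) * (1 / rn) * C
     = (1 - 1 / rm) * T + \<alpha> * \<beta> * T + (2 * \<alpha>\<^sup>2 * L\<^sup>2 / rn) * T + 2 * \<alpha>\<^sup>2 * \<Gamma> + \<alpha> / \<beta> * \<Gamma>
       + (2 * \<alpha>\<^sup>2 * L\<^sup>2 / rn) * ((1 / rn) * C) + (2 / rm) * ((1 / rn) * C)"
    by (simp only: distrib_right mult.assoc add.assoc)
  have fin: "(1 / rn) * (\<Sum>i<n. (1 / rm) * (\<Sum>j<m. (1 / rm) * (norm (a - x i))\<^sup>2 + (1 - 1 / rm) * (norm (a - z i j))\<^sup>2))
      + \<alpha>\<^sup>2 * (1 / rn)\<^sup>2 * \<Xi>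
     \<le> (1 - 1 / rm + \<alpha> * \<beta> + 2 * \<alpha>\<^sup>2 * L\<^sup>2 / rn) * T + (2 * \<alpha>\<^sup>2 + \<alpha> / \<beta>) * \<Gamma>
     + (2 * \<alpha>\<^sup>2 * L\<^sup>2 / rn + 2 / rm) * (1 / rn) * C"
    unfolding eqL eqR using i1 i2 i3 i4 by linarith
  then show ?thesis unfolding rn_def rm_def a_def T_def C_def \<Gamma>_def \<Xi>_def by simp
qed



lemma avg_mix:
  fixes v :: "nat \<Rightarrow> 'a::real_vector"
  assumes W: "doubly_stochastic n W"
  shows "avg n (\<lambda>i. \<Sum>r<n. W i r *\<^sub>R v r) = avg n v"
proof -
  have "(\<Sum>i<n. \<Sum>r<n. W i r *\<^sub>R v r) = (\<Sum>r<n. \<Sum>i<n. W i r *\<^sub>R v r)" by (rule sum.swap)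
  also have "\<dots> = (\<Sum>r<n. (\<Sum>i<n. W i r) *\<^sub>R v r)" by (simp add: scaleR_sum_left)
  also have "\<dots> = (\<Sum>r<n. v r)" using W unfolding doubly_stochastic_def by simp
  finally show ?thesis unfolding avg_def by simp
qed

lemma avg_add: "avg n (\<lambda>i. u i + v i) = avg n u + avg n v"
  unfolding avg_def by (simp add: sum.distrib scaleR_add_right)
lemma avg_diff: "avg n (\<lambda>i. u i - v i) = avg n u - avg n v"
  unfolding avg_def by (simp add: sum_subtractf scaleR_diff_right)
lemma avg_scale: "avg n (\<lambda>i. c *\<^sub>R u i) = c *\<^sub>R avg n u"
  unfolding avg_def by (simp add: scaleR_sum_right)
lemma avg_zero: "avg n (\<lambda>i. 0) = 0"
  unfolding avg_def by simp

lemma gt_step_eq: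
  "gt_step n m W \<alpha> Df (x, y, z, gp) d =
    (let g = saga_grad m Df (x, y, z, gp) d;
         y' = (\<lambda>i. \<Sum>r<n. W i r *\<^sub>R (y r + g r - gp r))
     in ((\<lambda>i. \<Sum>r<n. W i r *\<^sub>R (x r - \<alpha> *\<^sub>R y' r)), y', (\<lambda>i j. if j = snd (d i) then x i else z i j), g))"
  by (simp add: gt_step_def Let_def)

lemma saga_grad_eq:
  "saga_grad m Df (x, y, z, gp) d i = Df i (fst (d i)) (x i) - Df i (fst (d i)) (z i (fst (d i)))
        + (1 / real m) *\<^sub>R (\<Sum>j<m. Df i j (z i j))"
  by (simp add: saga_grad_def)

lemma gt_inv:
  assumes W: "doubly_stochastic n W"
  shows "avg n (fst (snd (gt_saga n m W \<alpha> Df x0 \<omega> k))) = avg n (snd (snd (snd (gt_saga n m W \<alpha> Df x0 \<omega> k))))"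
proof (induction k)
  case 0 then show ?case by simp
next
  case (Suc k)
  obtain x y z gp where st: "gt_saga n m W \<alpha> Df x0 \<omega> k = (x, y, z, gp)" by (cases "gt_saga n m W \<alpha> Df x0 \<omega> k") auto
  from Suc st have ih: "avg n y = avg n gp" by simp
  show ?case unfolding gt_saga.simps st gt_step_eq Let_def
    by (simp add: avg_mix[OF W] avg_add avg_diff ih)
qed

lemma step_avg_x:
  assumes W: "doubly_stochastic n W" and inv: "avg n y = avg n gp"
  shows "avg n (st_x (gt_step n m W \<alpha> Df (x, y, z, gp) d)) = avg n x - \<alpha> *\<^sub>R avg n (saga_grad m Df (x, y, z, gp) d)"
  unfolding st_x_def gt_step_eq Let_def
  by (simp add: avg_mix[OF W] avg_add avg_diff avg_scale inv)

lemma step_z: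
  "st_z (gt_step n m W \<alpha> Df (x, y, z, gp) d) = (\<lambda>i j. if j = snd (d i) then x i else z i j)"
  unfolding st_z_def gt_step_eq Let_def by simp



lemma var_le:
  fixes w :: "nat \<Rightarrow> 'a::real_inner"
  assumes m: "m \<ge> 1"
  shows "(\<Sum>t<m. (norm (w t - (1 / real m) *\<^sub>R (\<Sum>s<m. w s)))\<^sup>2) \<le> (\<Sum>t<m. (norm (w t))\<^sup>2)"
proof -
  define wb where "wb = (1 / real m) *\<^sub>R (\<Sum>s<m. w s)"
  have sw: "(\<Sum>s<m. w s) = real m *\<^sub>R wb" unfolding wb_def using m by simp
  have "(\<Sum>t<m. (norm (w t - wb))\<^sup>2) = (\<Sum>t<m. (norm (w t))\<^sup>2) - 2 * inner (\<Sum>t<m. w t) wb + real m * (norm wb)\<^sup>2"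
    unfolding norm_sq_diff by (simp add: sum.distrib sum_subtractf sum_distrib_left inner_sum_left)
  also have "\<dots> = (\<Sum>t<m. (norm (w t))\<^sup>2) - real m * (norm wb)\<^sup>2"
    unfolding sw by (simp add: power2_norm_eq_inner)
  also have "\<dots> \<le> (\<Sum>t<m. (norm (w t))\<^sup>2)" by simp
  finally show ?thesis unfolding wb_def .
qed

lemma step_expect:
  fixes Df :: "nat \<Rightarrow> nat \<Rightarrow> 'a::euclidean_space \<Rightarrow> 'a"
  assumes n: "n \<ge> 1" and m: "m \<ge> 1" and \<alpha>: "\<alpha> > 0" and \<beta>: "\<beta> > 0"
    and smooth: "\<And>i j x y. i < n \<Longrightarrow> j < m \<Longrightarrow> norm (Df i j x - Df i j y) \<le> L * norm (x - y)"
    and W: "doubly_stochastic n W" and inv: "avg n y = avg n gp"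
  shows "measure_pmf.expectation (Pd n m) (\<lambda>d. t_gap n m (gt_step n m W \<alpha> Df (x, y, z, gp) d))
    \<le> (1 - 1 / real m + \<alpha> * \<beta> + 2 * \<alpha>\<^sup>2 * L\<^sup>2 / real n) * t_gap n m (x, y, z, gp)
      + (2 * \<alpha>\<^sup>2 + \<alpha> / \<beta>) * avg_grad_sq n m Df (x, y, z, gp)
      + (2 * \<alpha>\<^sup>2 * L\<^sup>2 / real n + 2 / real m) * (1 / real n) * consensus_err n (x, y, z, gp)"
proof -
  define G where "G = (\<lambda>i. (1 / real m) *\<^sub>R (\<Sum>j<m. Df i j (x i)))"
  define c where "c = (\<lambda>i. (1 / real m) *\<^sub>R (\<Sum>j<m. Df i j (z i j)))"
  define \<xi> where "\<xi> = (\<lambda>i t. Df i t (x i) - Df i t (z i t) + c i - G i)"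
  define Gb where "Gb = avg n G"
  define xb where "xb = avg n x"
  define a where "a = xb - \<alpha> *\<^sub>R Gb"
  have xb': "xb = (1 / real n) *\<^sub>R (\<Sum>i<n. x i)" unfolding xb_def avg_def ..
  have wdef: "\<And>i. G i - c i = (1 / real m) *\<^sub>R (\<Sum>t<m. Df i t (x i) - Df i t (z i t))"
    unfolding G_def c_def by (simp add: sum_subtractf scaleR_diff_right)
  have xi_w: "\<And>i t. \<xi> i t = (Df i t (x i) - Df i t (z i t)) - (1 / real m) *\<^sub>R (\<Sum>s<m. Df i s (x i) - Df i s (z i s))"
    unfolding \<xi>_def wdef[symmetric] by (simp add: algebra_simps)
  have xi0: "\<And>i. i < n \<Longrightarrow> (\<Sum>t<m. \<xi> i t) = 0"
  proof -
    fix i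
    have "(\<Sum>t<m. \<xi> i t) = (\<Sum>t<m. Df i t (x i) - Df i t (z i t)) - real m *\<^sub>R ((1 / real m) *\<^sub>R (\<Sum>s<m. Df i s (x i) - Df i s (z i s)))"
      unfolding xi_w by (simp add: sum_subtractf sum_constant_scaleR)
    then show "(\<Sum>t<m. \<xi> i t) = 0" using m by simp
  qed
  have xi_bd: "\<And>i. i < n \<Longrightarrow> (\<Sum>t<m. (norm (\<xi> i t))\<^sup>2) / real m \<le> L\<^sup>2 * ((\<Sum>t<m. (norm (x i - z i t))\<^sup>2) / real m)"
  proof -
    fix i assume i: "i < n"
    have "(\<Sum>t<m. (norm (\<xi> i t))\<^sup>2) \<le> (\<Sum>t<m. (norm (Df i t (x i) - Df i t (z i t)))\<^sup>2)"
      unfolding xi_w by (rule var_le[OF m])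
    also have "\<dots> \<le> (\<Sum>t<m. L\<^sup>2 * (norm (x i - z i t))\<^sup>2)"
    proof (intro sum_mono)
      fix t assume "t \<in> {..<m}"
      then have "norm (Df i t (x i) - Df i t (z i t)) \<le> L * norm (x i - z i t)" using smooth i by simp
      then have "(norm (Df i t (x i) - Df i t (z i t)))\<^sup>2 \<le> (L * norm (x i - z i t))\<^sup>2"
        by (intro power_mono) auto
      then show "(norm (Df i t (x i) - Df i t (z i t)))\<^sup>2 \<le> L\<^sup>2 * (norm (x i - z i t))\<^sup>2"
        by (simp add: power_mult_distrib)
    qed
    also have "\<dots> = L\<^sup>2 * (\<Sum>t<m. (norm (x i - z i t))\<^sup>2)" by (simp add: sum_distrib_left)
    finally show "(\<Sum>t<m. (norm (\<xi> i t))\<^sup>2) / real m \<le> L\<^sup>2 * ((\<Sum>t<m. (norm (x i - z i t))\<^sup>2) / real m)"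
      using m by (simp add: divide_right_mono)
  qed
  have g_eq: "\<And>d. avg n (saga_grad m Df (x, y, z, gp) d) = Gb + (1 / real n) *\<^sub>R (\<Sum>i<n. \<xi> i (fst (d i)))"
  proof -
    fix d :: draws
    have sg: "saga_grad m Df (x, y, z, gp) d = (\<lambda>i. G i + \<xi> i (fst (d i)))"
      by (rule ext) (simp add: saga_grad_eq \<xi>_def c_def)
    show "avg n (saga_grad m Df (x, y, z, gp) d) = Gb + (1 / real n) *\<^sub>R (\<Sum>i<n. \<xi> i (fst (d i)))"
      unfolding Gb_def sg avg_add by (simp add: avg_def)
  qed
  have integrand: "\<And>d. t_gap n m (gt_step n m W \<alpha> Df (x, y, z, gp) d) = (1 / real n) * (\<Sum>i<n. (1 / real m) * (\<Sum>j<m.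
      (norm ((a - (if j = snd (d i) then x i else z i j)) - \<alpha> *\<^sub>R ((1 / real n) *\<^sub>R (\<Sum>i'<n. \<xi> i' (fst (d i'))))))\<^sup>2))"
  proof -
    fix d :: draws
    have e: "\<And>i j. avg n x - \<alpha> *\<^sub>R (Gb + (1 / real n) *\<^sub>R (\<Sum>i<n. \<xi> i (fst (d i)))) - (if j = snd (d i) then x i else z i j)
       = (a - (if j = snd (d i) then x i else z i j)) - \<alpha> *\<^sub>R ((1 / real n) *\<^sub>R (\<Sum>i'<n. \<xi> i' (fst (d i'))))"
      unfolding a_def xb_def by (simp add: algebra_simps)
    show "?thesis d"
      unfolding t_gap_def step_avg_x[OF W inv] step_z g_eq e ..
  qed
  have "measure_pmf.expectation (Pd n m) (\<lambda>d. t_gap n m (gt_step n m W \<alpha> Df (x, y, z, gp) d))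
     = (1 / real n) * (\<Sum>i<n. (1 / real m) * (\<Sum>j<m. (1 / real m) * (norm (a - x i))\<^sup>2 + (1 - 1 / real m) * (norm (a - z i j))\<^sup>2))
     + \<alpha>\<^sup>2 * (1 / real n)\<^sup>2 * (\<Sum>i<n. (\<Sum>t<m. (norm (\<xi> i t))\<^sup>2) / real m)"
    unfolding integrand by (rule expect_core[OF m xi0])
  also have "\<dots> \<le> (1 - 1 / real m + \<alpha> * \<beta> + 2 * \<alpha>\<^sup>2 * L\<^sup>2 / real n) * ((1 / real n) * (\<Sum>i<n. (1 / real m) * (\<Sum>j<m. (norm (xb - z i j))\<^sup>2)))
     + (2 * \<alpha>\<^sup>2 + \<alpha> / \<beta>) * (norm Gb)\<^sup>2
     + (2 * \<alpha>\<^sup>2 * L\<^sup>2 / real n + 2 / real m) * (1 / real n) * (\<Sum>i<n. (norm (x i - xb))\<^sup>2)"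
    unfolding a_def by (rule ineq_core[OF n m \<alpha> \<beta> xi_bd xb'])
  also have "\<dots> = (1 - 1 / real m + \<alpha> * \<beta> + 2 * \<alpha>\<^sup>2 * L\<^sup>2 / real n) * t_gap n m (x, y, z, gp)
      + (2 * \<alpha>\<^sup>2 + \<alpha> / \<beta>) * avg_grad_sq n m Df (x, y, z, gp)
      + (2 * \<alpha>\<^sup>2 * L\<^sup>2 / real n + 2 / real m) * (1 / real n) * consensus_err n (x, y, z, gp)"
    unfolding t_gap_def avg_grad_sq_def consensus_err_def st_x_def st_z_def xb_def Gb_def G_def by simp
  finally show ?thesis .
qed



definition cs :: "'a measure \<Rightarrow> bool" where
  "cs N \<longleftrightarrow> countable (space N) \<and> (\<forall>x\<in>space N. {x} \<in> sets N)"

lemma cs_measurable: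
  assumes "cs N" "f \<in> space N \<rightarrow> space M"
  shows "f \<in> measurable N M"
  unfolding measurable_def
proof (safe)
  fix A assume "A \<in> sets M"
  have "f -` A \<inter> space N = (\<Union>x\<in>f -` A \<inter> space N. {x})" by auto
  also have "\<dots> \<in> sets N"
    using assms(1) unfolding cs_def
    by (intro sets.countable_UN') (auto intro: countable_subset)
  finally show "f -` A \<inter> space N \<in> sets N" .
qed (use assms(2) in auto)

lemma cs_borel: "cs N \<Longrightarrow> f \<in> borel_measurable N"
  by (rule cs_measurable) auto

lemma cs_pmf: "cs (measure_pmf (p :: ('a::countable) pmf))"
  unfolding cs_def by simp

lemma cs_PiM:
  assumes "finite J" "\<And>i. i \<in> J \<Longrightarrow> cs (M i)"
  shows "cs (PiM J M)"
  unfolding cs_def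
proof safe
  show "countable (space (PiM J M))" unfolding space_PiM
    using assms unfolding cs_def by (intro countable_PiE) auto
next
  fix x assume x: "x \<in> space (PiM J M)"
  then have xe: "x \<in> extensional J" and xs: "\<And>i. i \<in> J \<Longrightarrow> x i \<in> space (M i)"
    unfolding space_PiM by (auto simp: PiE_def)
  have "{x} = PiE J (\<lambda>i. {x i})" using PiE_singleton[OF xe] by simp
  also have "\<dots> \<in> sets (PiM J M)"
    using assms xs unfolding cs_def by (intro sets_PiM_I_finite) auto
  finally show "{x} \<in> sets (PiM J M)" .
qed

lemma draw_space_eq: "draw_space n m = PiM {..<n} (\<lambda>_. measure_pmf (Qd m))"
  unfolding draw_space_def Qd_def ..

lemma cs_D: "cs (draw_space n m)"
  unfolding draw_space_eq by (intro cs_PiM cs_pmf) auto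

lemma cs_DJ: "finite J \<Longrightarrow> cs (PiM J (\<lambda>_. draw_space n m))"
  by (intro cs_PiM cs_D)

lemma prob_D: "prob_space (draw_space n m)"
  unfolding draw_space_eq by (intro prob_space_PiM prob_space_measure_pmf)

lemma D_distr: "draw_space n m = distr (measure_pmf (Pd n m)) (draw_space n m) (\<lambda>x. restrict x {..<n})"
proof -
  interpret product_prob_space "\<lambda>_. measure_pmf (Qd m)"
    by (intro product_prob_spaceI prob_space_measure_pmf)
  show ?thesis unfolding draw_space_eq
  proof (rule PiM_eqI[symmetric])
    show "sets (distr (measure_pmf (Pd n m)) (PiM {..<n} (\<lambda>_. measure_pmf (Qd m))) (\<lambda>x. restrict x {..<n}))
       = sets (PiM {..<n} (\<lambda>_. measure_pmf (Qd m)))" by simp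
  next
    fix A assume A: "\<And>i. i \<in> {..<n} \<Longrightarrow> A i \<in> sets (measure_pmf (Qd m))"
    have "PiE {..<n} A \<in> sets (PiM {..<n} (\<lambda>_. measure_pmf (Qd m)))"
      using A by (intro sets_PiM_I_finite) auto
    then have "emeasure (distr (measure_pmf (Pd n m)) (PiM {..<n} (\<lambda>_. measure_pmf (Qd m))) (\<lambda>x. restrict x {..<n})) (PiE {..<n} A)
       = emeasure (measure_pmf (Pd n m)) ((\<lambda>x. restrict x {..<n}) -` PiE {..<n} A)"
      by (subst emeasure_distr) (auto simp: space_PiM)
    also have "\<dots> = emeasure (measure_pmf (Pd n m)) (PiE_dflt {..<n} undefined A)"
      unfolding Pd_def by (intro emeasure_eq_AE AE_pmfI) (auto simp: PiE_dflt_def set_Pi_pmf)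
    also have "\<dots> = (\<Prod>i<n. emeasure (measure_pmf (Qd m)) (A i))"
      unfolding Pd_def
      by (simp add: measure_pmf.emeasure_eq_measure measure_Pi_pmf_PiE_dflt prod_ennreal)
    finally show "emeasure (distr (measure_pmf (Pd n m)) (PiM {..<n} (\<lambda>_. measure_pmf (Qd m))) (\<lambda>x. restrict x {..<n})) (PiE {..<n} A)
       = (\<Prod>i\<in>{..<n}. emeasure (measure_pmf (Qd m)) (A i))" by simp
  qed simp
qed

lemma D_nn_integral:
  fixes f :: "draws \<Rightarrow> real"
  assumes m: "m \<ge> 1" and f0: "\<And>d. f d \<ge> 0"
  shows "(\<integral>\<^sup>+ d. ennreal (f d) \<partial>draw_space n m) = ennreal (measure_pmf.expectation (Pd n m) f)"
proof -
  have "(\<integral>\<^sup>+ d. ennreal (f d) \<partial>draw_space n m)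
      = (\<integral>\<^sup>+ d. ennreal (f d) \<partial>distr (measure_pmf (Pd n m)) (draw_space n m) (\<lambda>x. restrict x {..<n}))"
    using D_distr by metis
  also have "\<dots> = (\<integral>\<^sup>+ d. ennreal (f (restrict d {..<n})) \<partial>measure_pmf (Pd n m))"
    by (rule nn_integral_distr) (auto simp: draw_space_eq space_PiM intro!: cs_borel cs_PiM cs_pmf)
  also have "\<dots> = (\<integral>\<^sup>+ d. ennreal (f d) \<partial>measure_pmf (Pd n m))"
  proof (intro nn_integral_cong_AE AE_pmfI)
    fix d assume "d \<in> set_pmf (Pd n m)"
    then have "restrict d {..<n} = d" unfolding Pd_def
      by (auto simp: set_Pi_pmf PiE_dflt_def restrict_def fun_eq_iff)
    then show "ennreal (f (restrict d {..<n})) = ennreal (f d)" by simp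
  qed
  also have "\<dots> = ennreal (measure_pmf.expectation (Pd n m) f)"
    by (rule nn_integral_eq_integral[OF integrable_Pd[OF m]]) (simp add: f0)
  finally show ?thesis .
qed



lemma gt_local:
  "(\<And>t. t < k \<Longrightarrow> \<omega> t = \<omega>' t) \<Longrightarrow> gt_saga n m W \<alpha> Df x0 \<omega> k = gt_saga n m W \<alpha> Df x0 \<omega>' k"
  by (induction k) auto

lemma t_gap_nonneg: "t_gap n m st \<ge> 0"
  unfolding t_gap_def by (auto intro!: mult_nonneg_nonneg sum_nonneg divide_nonneg_nonneg)

theorem lemma5:
  fixes n m :: nat and L \<alpha> \<beta> :: real
    and f :: "nat \<Rightarrow> nat \<Rightarrow> 'a::euclidean_space \<Rightarrow> real"
    and Df :: "nat \<Rightarrow> nat \<Rightarrow> 'a \<Rightarrow> 'a"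
    and W :: "nat \<Rightarrow> nat \<Rightarrow> real" and x0 :: 'a and k :: nat
  assumes n: "n \<ge> 1" and m: "m \<ge> 1" and L: "L > 0"
    and grad: "\<And>i j x. i < n \<Longrightarrow> j < m \<Longrightarrow> GDERIV (f i j) x :> Df i j x"
    and smooth: "\<And>i j x y. i < n \<Longrightarrow> j < m \<Longrightarrow> norm (Df i j x - Df i j y) \<le> L * norm (x - y)"
    and bdd: "bdd_below (range (\<lambda>x. (1 / real n) * (\<Sum>i<n. (1 / real m) * (\<Sum>j<m. f i j x))))"
    and W: "doubly_stochastic n W" "primitive_mat n W"
    and \<alpha>: "\<alpha> > 0" and \<beta>: "\<beta> > 0"
  defines "\<theta> \<equiv> 1 - 1 / real m + \<alpha> * \<beta> + 2 * \<alpha>\<^sup>2 * L\<^sup>2 / real n"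
  shows "AE \<omega> in run_space n m.
           real_cond_exp (run_space n m) (filt n m k)
             (\<lambda>\<omega>. t_gap n m (gt_saga n m W \<alpha> Df x0 \<omega> (Suc k))) \<omega>
         \<le> \<theta> * t_gap n m (gt_saga n m W \<alpha> Df x0 \<omega> k)
           + (2 * \<alpha>\<^sup>2 + \<alpha> / \<beta>) * avg_grad_sq n m Df (gt_saga n m W \<alpha> Df x0 \<omega> k)
           + (2 * \<alpha>\<^sup>2 * L\<^sup>2 / real n + 2 / real m) * (1 / real n)
               * consensus_err n (gt_saga n m W \<alpha> Df x0 \<omega> k)"
proof -
  define M where "M = run_space n m"
  define F where "F = filt n m k"
  define D where "D = draw_space n m"
  define S where "S = (\<lambda>\<omega>. gt_saga n m W \<alpha> Df x0 \<omega> k)"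
  define X where "X = (\<lambda>\<omega>. t_gap n m (gt_saga n m W \<alpha> Df x0 \<omega> (Suc k)))"
  define H where "H = (\<lambda>\<omega>. measure_pmf.expectation (Pd n m) (\<lambda>d. t_gap n m (gt_step n m W \<alpha> Df (S \<omega>) d)))"
  define R where "R = (\<lambda>\<omega>. \<theta> * t_gap n m (S \<omega>) + (2 * \<alpha>\<^sup>2 + \<alpha> / \<beta>) * avg_grad_sq n m Df (S \<omega>)
           + (2 * \<alpha>\<^sup>2 * L\<^sup>2 / real n + 2 / real m) * (1 / real n) * consensus_err n (S \<omega>))"
  have XS: "\<And>\<omega>. X \<omega> = t_gap n m (gt_step n m W \<alpha> Df (S \<omega>) (\<omega> k))" by (simp add: X_def S_def)
  have X0: "\<And>\<omega>. X \<omega> \<ge> 0" unfolding X_def by (rule t_gap_nonneg)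
  have H0: "\<And>\<omega>. H \<omega> \<ge> 0" unfolding H_def by (intro integral_nonneg_AE) (simp add: t_gap_nonneg)
  have HR: "\<And>\<omega>. H \<omega> \<le> R \<omega>"
  proof -
    fix \<omega>
    obtain x y z gp where st: "S \<omega> = (x, y, z, gp)" by (cases "S \<omega>") auto
    have inv: "avg n y = avg n gp" using gt_inv[OF W(1), of m \<alpha> Df x0 \<omega> k] st unfolding S_def by simp
    show "H \<omega> \<le> R \<omega>" unfolding H_def R_def st \<theta>_def
      by (rule step_expect[OF n m \<alpha> \<beta> smooth W(1) inv])
  qed
  have probM: "prob_space M" unfolding M_def run_space_def by (intro prob_space_PiM prob_D)
  interpret PM: prob_space M by (rule probM)
  interpret PP: product_prob_space "\<lambda>_::nat. D" UNIV unfolding D_def by (intro product_prob_spaceI prob_D)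
  have MPi: "M = PiM UNIV (\<lambda>_. D)" unfolding M_def run_space_def D_def ..
  have rK: "\<And>J. (\<lambda>\<omega>. restrict \<omega> J) \<in> measurable M (PiM J (\<lambda>_. D))"
    unfolding MPi by (rule measurable_restrict_subset) simp
  have csJ: "\<And>J. finite J \<Longrightarrow> cs (PiM J (\<lambda>_. D))" unfolding D_def by (rule cs_DJ)
  have Fdef: "F = vimage_algebra (space M) (\<lambda>\<omega>. restrict \<omega> {..<k}) (PiM {..<k} (\<lambda>_. D))"
    unfolding F_def filt_def M_def D_def ..
  have rfun: "(\<lambda>\<omega>. restrict \<omega> {..<k}) \<in> space M \<rightarrow> space (PiM {..<k} (\<lambda>_. D))"
    using measurable_space[OF rK] by auto
  have setsF: "sets F = {(\<lambda>\<omega>. restrict \<omega> {..<k}) -` B \<inter> space M | B. B \<in> sets (PiM {..<k} (\<lambda>_. D))}"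
    unfolding Fdef by (rule sets_vimage_algebra2[OF rfun])
  have sub: "subalgebra M F"
    unfolding subalgebra_def
  proof
    show "space F = space M" unfolding Fdef by simp
    show "sets F \<subseteq> sets M" unfolding setsF using measurable_sets[OF rK] by auto
  qed
  interpret Sub: finite_measure_subalgebra M F
    by unfold_locales (rule sub)
  have rF: "(\<lambda>\<omega>. restrict \<omega> {..<k}) \<in> measurable F (PiM {..<k} (\<lambda>_. D))"
    unfolding Fdef by (rule measurable_vimage_algebra1[OF rfun])
  have Sloc: "\<And>\<omega>. S (restrict \<omega> {..<k}) = S \<omega>" unfolding S_def by (rule gt_local) simp
  have Xloc: "\<And>\<omega>. X (restrict \<omega> {..<Suc k}) = X \<omega>"
    unfolding X_def by (subst gt_local[of "Suc k"]) simp_all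
  have Hloc: "\<And>\<omega>. H (restrict \<omega> {..<k}) = H \<omega>" unfolding H_def Sloc ..
  have Xm: "(\<lambda>\<omega>. ennreal (X \<omega>)) \<in> borel_measurable M"
  proof -
    have "(\<lambda>\<omega>. ennreal (X (restrict \<omega> {..<Suc k}))) \<in> borel_measurable M"
      by (rule measurable_compose[OF rK[of "{..<Suc k}"] cs_borel[OF csJ]]) simp
    then show ?thesis unfolding Xloc .
  qed
  have Hm: "(\<lambda>\<omega>. ennreal (H \<omega>)) \<in> borel_measurable F"
  proof -
    have "(\<lambda>\<omega>. ennreal (H (restrict \<omega> {..<k}))) \<in> borel_measurable F"
      by (rule measurable_compose[OF rF cs_borel[OF csJ]]) simp
    then show ?thesis unfolding Hloc .
  qed
  have intD: "\<And>st. (\<integral>\<^sup>+ y. ennreal (t_gap n m (gt_step n m W \<alpha> Df st y)) \<partial>D)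
      = ennreal (measure_pmf.expectation (Pd n m) (\<lambda>d. t_gap n m (gt_step n m W \<alpha> Df st d)))"
    unfolding D_def by (rule D_nn_integral[OF m t_gap_nonneg])
  have distrJ: "\<And>(J :: nat set) (\<Phi> :: _ \<Rightarrow> ennreal). finite J \<Longrightarrow>
      (\<integral>\<^sup>+ \<omega>. \<Phi> (restrict \<omega> J) \<partial>M) = (\<integral>\<^sup>+ v. \<Phi> v \<partial>PiM J (\<lambda>_. D))"
  proof -
    fix J :: "nat set" and \<Phi> :: "_ \<Rightarrow> ennreal" assume J: "finite J"
    have "(\<integral>\<^sup>+ v. \<Phi> v \<partial>PiM J (\<lambda>_. D)) = (\<integral>\<^sup>+ v. \<Phi> v \<partial>distr M (PiM J (\<lambda>_. D)) (\<lambda>\<omega>. restrict \<omega> J))"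
      using PP.distr_PiM_restrict_finite[OF J subset_UNIV] unfolding MPi by simp
    also have "\<dots> = (\<integral>\<^sup>+ \<omega>. \<Phi> (restrict \<omega> J) \<partial>M)"
    proof (rule nn_integral_distr[OF rK])
      have "\<Phi> \<in> borel_measurable (PiM J (\<lambda>_. D))" by (rule cs_borel[OF csJ[OF J]])
      then show "\<Phi> \<in> borel_measurable (distr M (PiM J (\<lambda>_. D)) (\<lambda>\<omega>. restrict \<omega> J))"
        by (simp cong: measurable_cong_sets)
    qed
    finally show "(\<integral>\<^sup>+ \<omega>. \<Phi> (restrict \<omega> J) \<partial>M) = (\<integral>\<^sup>+ v. \<Phi> v \<partial>PiM J (\<lambda>_. D))" ..
  qed
  have charact: "\<And>A. A \<in> sets F \<Longrightarrow> (\<integral>\<^sup>+ x \<in> A. ennreal (X x) \<partial>M) = (\<integral>\<^sup>+ x \<in> A. ennreal (H x) \<partial>M)"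
  proof -
    fix A assume "A \<in> sets F"
    then obtain B where B: "B \<in> sets (PiM {..<k} (\<lambda>_. D))"
      and A: "A = (\<lambda>\<omega>. restrict \<omega> {..<k}) -` B \<inter> space M" unfolding setsF by blast
    define \<Phi> where "\<Phi> = (\<lambda>v. ennreal (X v) * indicator B (restrict v {..<k}))"
    define \<Psi> where "\<Psi> = (\<lambda>u. ennreal (H u) * indicator B u)"
    have "(\<integral>\<^sup>+ x \<in> A. ennreal (X x) \<partial>M) = (\<integral>\<^sup>+ \<omega>. \<Phi> (restrict \<omega> {..<Suc k}) \<partial>M)"
    proof (intro nn_integral_cong)
      fix \<omega> assume \<omega>: "\<omega> \<in> space M"
      have "restrict (restrict \<omega> {..<Suc k}) {..<k} = restrict \<omega> {..<k}" by (auto simp: restrict_def fun_eq_iff)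
      then show "ennreal (X \<omega>) * indicator A \<omega> = \<Phi> (restrict \<omega> {..<Suc k})"
        unfolding \<Phi>_def Xloc A using \<omega> by (simp add: indicator_def)
    qed
    also have "\<dots> = (\<integral>\<^sup>+ v. \<Phi> v \<partial>PiM {..<Suc k} (\<lambda>_. D))" by (rule distrJ) simp
    also have "\<dots> = (\<integral>\<^sup>+ u. (\<integral>\<^sup>+ y. \<Phi> (u(k := y)) \<partial>D) \<partial>PiM {..<k} (\<lambda>_. D))"
      unfolding lessThan_Suc by (rule PP.product_nn_integral_insert) (auto intro!: cs_borel csJ)
    also have "\<dots> = (\<integral>\<^sup>+ u. \<Psi> u \<partial>PiM {..<k} (\<lambda>_. D))"
    proof (intro nn_integral_cong)
      fix u assume u: "u \<in> space (PiM {..<k} (\<lambda>_. D))"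
      then have ue: "u \<in> extensional {..<k}" unfolding space_PiM by (auto simp: PiE_def)
      have r: "\<And>y. restrict (u(k := y)) {..<k} = u"
        using ue by (auto simp: restrict_def fun_eq_iff extensional_def)
      have Su: "\<And>y. S (u(k := y)) = S u" unfolding S_def by (rule gt_local) simp
      have "\<And>y. \<Phi> (u(k := y)) = ennreal (t_gap n m (gt_step n m W \<alpha> Df (S u) y)) * indicator B u"
        unfolding \<Phi>_def XS r Su by simp
      then have "(\<integral>\<^sup>+ y. \<Phi> (u(k := y)) \<partial>D) = (\<integral>\<^sup>+ y. ennreal (t_gap n m (gt_step n m W \<alpha> Df (S u) y)) \<partial>D) * indicator B u"
        by (simp add: nn_integral_multc[OF cs_borel[OF cs_D[of n m, folded D_def]]])
      also have "\<dots> = \<Psi> u" unfolding intD \<Psi>_def H_def ..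
      finally show "(\<integral>\<^sup>+ y. \<Phi> (u(k := y)) \<partial>D) = \<Psi> u" .
    qed
    also have "\<dots> = (\<integral>\<^sup>+ \<omega>. \<Psi> (restrict \<omega> {..<k}) \<partial>M)" by (rule distrJ[symmetric]) simp
    also have "\<dots> = (\<integral>\<^sup>+ x \<in> A. ennreal (H x) \<partial>M)"
    proof (intro nn_integral_cong)
      fix \<omega> assume \<omega>: "\<omega> \<in> space M"
      show "\<Psi> (restrict \<omega> {..<k}) = ennreal (H \<omega>) * indicator A \<omega>"
        unfolding \<Psi>_def Hloc A using \<omega> by (simp add: indicator_def)
    qed
    finally show "(\<integral>\<^sup>+ x \<in> A. ennreal (X x) \<partial>M) = (\<integral>\<^sup>+ x \<in> A. ennreal (H x) \<partial>M)" .
  qed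
  have AE1: "AE \<omega> in M. ennreal (H \<omega>) = nn_cond_exp M F (\<lambda>\<omega>. ennreal (X \<omega>)) \<omega>"
    by (rule Sub.nn_cond_exp_charact[OF charact Xm Hm])
  have AE2: "AE \<omega> in M. (\<lambda>_. 0::ennreal) \<omega> = nn_cond_exp M F (\<lambda>_. 0) \<omega>"
    by (rule Sub.nn_cond_exp_F_meas) simp
  have negX: "(\<lambda>\<omega>. ennreal (- X \<omega>)) = (\<lambda>_. 0)" using X0 by (intro ext ennreal_neg) auto
  have "AE \<omega> in M. real_cond_exp M F X \<omega> \<le> R \<omega>"
    using AE1 AE2
  proof eventually_elim
    case (elim \<omega>)
    have "real_cond_exp M F X \<omega> = enn2real (ennreal (H \<omega>)) - enn2real 0"
      unfolding real_cond_exp_def negX elim(1)[symmetric] elim(2)[symmetric] ..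
    also have "\<dots> = H \<omega>" using H0 by simp
    finally show ?case using HR by simp
  qed
  then show ?thesis unfolding M_def F_def X_def R_def S_def .
qed


end
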